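(* Let $a,b$ be coprime integers with $\tfrac{a}{b}<0$ and $-a>b>2$, and let $\mathcal{D}=\{0,1,\ldots,|a|-1\}$. Let $N=N_0\in\mathbb{Z}$ and define integers $N_1,N_2,\ldots$ and digits $d_0,d_1,\ldots\in\mathcal{D}$ recursively by $$bN_j=aN_{j+1}+d_j,$$ where $d_j\in\mathcal{D}$ is the unique digit with $d_j\equiv bN_j \pmod{a}$ (so that $N_{j+1}=(bN_j-d_j)/a\in\mathbb{Z}$). Then the sequence $(N_j)_{j\ge 0}$ is eventually zero. *)

theory Defs
  imports Complex_Main "HOL-Number_Theory.Cong"
begin

end

theory Submission
  imports Defs
begin

definition fm :: "int \<Rightarrow> int" where
  "fm n = (if n > 0 then 2*n - 1 else -2*n)"

lemma step_pos:
  fixes A b n n' d :: int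
  assumes "A > b" "b > 0" "0 \<le> d" "d \<le> A - 1" "A * n' = d - b * n" "n > 0"
  shows "n' \<le> 0 \<and> n' > -n"
proof -
  have A0: "A > 0" using assms by simp
  have "b * n > 0" using assms by simp
  hence "A * n' < A * 1" using assms by linarith
  hence "n' < 1" using A0 by (simp add: mult_less_cancel_left_pos)
  moreover have "b * n < A * n" using assms by (simp add: mult_strict_right_mono)
  hence "A * n' > A * (-n)" using assms by (simp only: mult_minus_right)
  hence "n' > -n" using A0 by (metis mult_less_cancel_left_pos mult_minus_right)
  ultimately show ?thesis by simp
qed

lemma step_neg:
  fixes A b n n' d :: int
  assumes "A > b" "b > 0" "0 \<le> d" "d \<le> A - 1" "A * n' = d - b * n" "n < 0"
  shows "n' \<ge> 0 \<and> n' \<le> -n"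
proof -
  have A0: "A > 0" using assms by simp
  have "b * n < 0" using assms by (simp add: mult_pos_neg)
  hence "A * n' > A * (-1)" using assms by simp
  hence c1: "n' > -1" using A0 by (metis mult_less_cancel_left_pos)
  have "b * (-n) < A * (-n)" using assms by (simp add: mult_strict_right_mono)
  moreover have "A*(-n+1) = A*(-n) + A" "b*(-n) = -(b*n)" by (simp_all add: algebra_simps)
  ultimately have "A * n' < A * (-n + 1)" using assms by linarith
  hence "n' < -n + 1" using A0 by (metis mult_less_cancel_left_pos)
  with c1 show ?thesis by simp
qed

lemma step_zero:
  fixes A b n' d :: int
  assumes "A > 0" "0 \<le> d" "d \<le> A - 1" "A * n' = d"
  shows "n' = 0"
proof -
  have "A * n' < A * 1" "A * n' > A * (-1)" using assms by auto
  hence "n' < 1" "n' > -1" using assms(1) by (metis mult_less_cancel_left_pos)+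
  thus ?thesis by simp
qed

theorem mainTheorem1:
  fixes a b :: int and N d :: "nat \<Rightarrow> int"
  assumes "coprime a b"
    and "real_of_int a / real_of_int b < 0"
    and "- a > b" and "b > 2"
    and "\<And>j. d j \<in> {0..\<bar>a\<bar> - 1}"
    and "\<And>j. [d j = b * N j] (mod a)"
    and "\<And>j. b * N j = a * N (Suc j) + d j"
  shows "\<exists>J. \<forall>j\<ge>J. N j = 0"
proof -
  have a0: "a < 0" using assms(3,4) by simp
  define A where "A = -a"
  have A: "A > b" "A > 0" using assms(3,4) a0 by (auto simp: A_def)
  have dj: "0 \<le> d j" "d j \<le> A - 1" for j using assms(5)[of j] a0 by (auto simp: A_def)
  have eq: "A * N (Suc j) = d j - b * N j" for j using assms(7)[of j] by (simp add: A_def)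
  have z: "N (Suc j) = 0" if "N j = 0" for j
    using step_zero[OF A(2) dj(1)[of j] dj(2)[of j]] eq[of j] that by simp
  have dec: "nat (fm (N (Suc j))) < nat (fm (N j))" if "N j \<noteq> 0" for j
  proof (cases "N j > 0")
    case True
    then show ?thesis using step_pos[OF A(1) _ dj(1)[of j] dj(2)[of j] eq[of j]] assms(4)
      by (auto simp: fm_def)
  next
    case False
    then have n: "N j < 0" using that by simp
    then show ?thesis using step_neg[OF A(1) _ dj(1)[of j] dj(2)[of j] eq[of j]] assms(4)
      by (auto simp: fm_def)
  qed
  have ex: "\<exists>j. N j = 0"
  proof (rule ccontr)
    assume "\<not> ?thesis"
    hence "\<forall>j. nat (fm (N (Suc j))) < nat (fm (N j))" using dec by auto
    hence h: "\<forall>j. nat (fm (N (Suc j))) < nat (fm (N j))" by blast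
    have "nat (fm (N j)) + j \<le> nat (fm (N 0))" for j
    proof (induction j)
      case 0 show ?case by simp
    next
      case (Suc j) show ?case using Suc h[rule_format, of j] by linarith
    qed
    hence "nat (fm (N (Suc (nat (fm (N 0)))))) + Suc (nat (fm (N 0))) \<le> nat (fm (N 0))" by blast
    thus False by simp
  qed
  then obtain J where J: "N J = 0" by blast
  have "N j = 0" if "j \<ge> J" for j
    using that
  proof (induction j rule: dec_induct)
    case base then show ?case using J .
  next
    case (step k) then show ?case using z by blast
  qed
  thus ?thesis by blast
qed

end
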